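(* Every asymptotic stochastic super-solution $w$ of the lower Isaacs equation satisfies $w\ge v^+_M$ on $[0,T]\times\mathbb{R}^d$.
   Context: Setting: $U,V$ compact metric spaces; $b,\sigma$ on $[0,T]\times\mathbb{R}^d\times U\times V$ jointly continuous, locally Lipschitz in $x$ uniformly in $(t,u,v)$, with linear growth; $g:\mathbb{R}^d\to\mathbb{R}$ bounded continuous. For each $s$ a fixed filtered probability space $(\Omega,\mathcal{F},\mathbb{P},(\mathcal{F}_t)_{s\le t\le T})$ (usual conditions) with a Brownian motion $W$; $X^{s,x;u,\gamma}$ is the strong solution of $dX_t=b(t,X_t,u_t,v_t)dt+\sigma(t,X_t,u_t,v_t)dW_t$, $X_s=x$, with $v_t=\gamma(t,X_\cdot,u_t)$. $\mathcal{U}(s)$: $(\mathcal{F}_t)$-predictable $U$-valued processes. With $\mathcal{B}_t=\sigma(y(q),s\le q\le t)$ on $C[s,T]$, $\mathcal{C}(s)$ is the set of elementary counter-strategies $\gamma(t,y,u)=\sum_k1_{\{\tau_{k-1}(y)<t\le\tau_k(y)\}}\eta_k(y,u)\in V$ ($\tau_k$ stopping rules of $(\mathcal{B}_t)$, $\eta_k$ $\mathcal{B}_{\tau_{k-1}}\otimes\mathcal{B}(U)$-measurable). $\mathcal{C}^M(s)$: simple Markov counter-strategies, i.e. for some grid $s=t_0<\dots<t_n=T$, $\gamma(t,y,u)=\sum_k1_{\{t_{k-1}<t\le t_k\}}\eta_k(y(t_{k-1}),u)$ with $\eta_k:\mathbb{R}^d\times U\to V$ measurable. $v^+_M(s,x)=\inf_{\gamma\in\mathcal{C}^M(s)}\sup_{u\in\mathcal{U}(s)}\mathbb{E}[g(X^{s,x;u,\gamma}_T)]$.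 Asymptotic stochastic super-solution: a bounded continuous $w$ with $w(T,\cdot)\ge g$, for which there is $\varphi:(0,\infty)\to(0,\infty)$ with $\varphi(\varepsilon)\to0$ as $\varepsilon\searrow0$ such that for every $s$ and $r\in[s,T]$ there is a measurable $\eta:\mathbb{R}^d\times U\to V$ such that for all $x$, $\gamma\in\mathcal{C}(s)$, $u\in\mathcal{U}(s)$, with $\gamma[r,\eta](t,y,u)=1_{\{s<t\le r\}}\gamma(t,y,u)+1_{\{r<t\le T\}}\eta(y(r),u)$, for all $t\in[r,T]$: $w(r,X^{s,x;u,\gamma}_r)\ge\mathbb{E}[w(t,X^{s,x;u,\gamma[r,\eta]}_t)\mid\mathcal{F}_r]-(t-r)\varphi(t-r)$ a.s. *)

theory Defs
  imports "HOL-Probability.Probability"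
begin

text \<open>Filtration on [s,T] satisfying the usual conditions (right-continuous, complete).
  The sub-sigma-algebras are given as measures (as used by real_cond_exp).\<close>
definition sg_filt_usual :: "'w measure \<Rightarrow> (real \<Rightarrow> 'w measure) \<Rightarrow> real \<Rightarrow> real \<Rightarrow> bool" where
  "sg_filt_usual M F s T \<longleftrightarrow> prob_space M \<and>
     (\<forall>t\<in>{s..T}. subalgebra M (F t)) \<and>
     (\<forall>t1 t2. s \<le> t1 \<and> t1 \<le> t2 \<and> t2 \<le> T \<longrightarrow> sets (F t1) \<subseteq> sets (F t2)) \<and>
     (\<forall>t\<in>{s..<T}. sets (F t) = (\<Inter>t'\<in>{t<..T}. sets (F t'))) \<and>
     (\<forall>N. (\<exists>A\<in>null_sets M. N \<subseteq> A) \<longrightarrow> N \<in> sets (F s))"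

definition sg_brownian :: "'w measure \<Rightarrow> (real \<Rightarrow> 'w measure) \<Rightarrow> real \<Rightarrow> real
    \<Rightarrow> (real \<Rightarrow> 'w \<Rightarrow> real ^ 'm) \<Rightarrow> bool" where
  "sg_brownian M F s T W \<longleftrightarrow>
     (\<forall>\<omega>\<in>space M. W s \<omega> = 0 \<and> continuous_on {s..T} (\<lambda>t. W t \<omega>)) \<and>
     (\<forall>t\<in>{s..T}. W t \<in> borel_measurable (F t)) \<and>
     (\<forall>t1 t2. s \<le> t1 \<and> t1 < t2 \<and> t2 \<le> T \<longrightarrow>
        prob_space.indep_sets M
          (\<lambda>i. case i of None \<Rightarrow> sets (F t1)
                | Some j \<Rightarrow> sigma_sets (space M)
                    {(\<lambda>\<omega>. W t2 \<omega> $ j - W t1 \<omega> $ j) -` A \<inter> space M | A. A \<in> sets (borel :: real measure)})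
          UNIV \<and>
        (\<forall>j. distributed M lborel (\<lambda>\<omega>. W t2 \<omega> $ j - W t1 \<omega> $ j)
               (\<lambda>z. ennreal (normal_density 0 (sqrt (t2 - t1)) z))))"

definition sg_conv_prob :: "'w measure \<Rightarrow> (nat \<Rightarrow> 'w \<Rightarrow> ennreal) \<Rightarrow> bool" where
  "sg_conv_prob M G \<longleftrightarrow>
     (\<forall>n. \<forall>e>0. {\<omega>\<in>space M. ennreal e < G n \<omega>} \<in> sets M) \<and>
     (\<forall>e>0. (\<lambda>n. measure M {\<omega>\<in>space M. ennreal e < G n \<omega>}) \<longlonglongrightarrow> 0)"

definition sg_simple :: "'w measure \<Rightarrow> (real \<Rightarrow> 'w measure) \<Rightarrow> real \<Rightarrow> real
    \<Rightarrow> real list \<times> (nat \<Rightarrow> 'w \<Rightarrow> real) \<Rightarrow> bool" where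
  "sg_simple M F s T p \<longleftrightarrow> (let ts = fst p; \<xi> = snd p in
     ts \<noteq> [] \<and> ts ! 0 = s \<and> last ts = T \<and> sorted_wrt (<) ts \<and>
     (\<forall>i < length ts - 1. \<xi> i \<in> borel_measurable (F (ts ! i)) \<and>
        (\<exists>B. \<forall>\<omega>\<in>space M. \<bar>\<xi> i \<omega>\<bar> \<le> B)))"

definition sg_simple_val :: "real list \<times> (nat \<Rightarrow> 'w \<Rightarrow> real) \<Rightarrow> real \<Rightarrow> 'w \<Rightarrow> real" where
  "sg_simple_val p q \<omega> = (let ts = fst p; \<xi> = snd p in
     (\<Sum>i<length ts - 1. if ts ! i < q \<and> q \<le> ts ! (i+1) then \<xi> i \<omega> else 0))"

definition sg_simple_int :: "real list \<times> (nat \<Rightarrow> 'w \<Rightarrow> real) \<Rightarrow> (real \<Rightarrow> 'w \<Rightarrow> real)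
    \<Rightarrow> real \<Rightarrow> 'w \<Rightarrow> real" where
  "sg_simple_int p B t \<omega> = (let ts = fst p; \<xi> = snd p in
     (\<Sum>i<length ts - 1. \<xi> i \<omega> * (B (min t (ts ! (i+1))) \<omega> - B (min t (ts ! i)) \<omega>)))"

text \<open>I is (a version of) the Ito integral of h against the scalar Brownian motion B on [s,T]:
  a continuous adapted process which is the limit (in probability, uniformly in time) of the
  elementary integrals of any simple predictable approximation of h in the sense
  int_s^T (h_n - h)^2 dt -> 0 in probability (such an approximation must exist).\<close>
definition sg_ito :: "'w measure \<Rightarrow> (real \<Rightarrow> 'w measure) \<Rightarrow> real \<Rightarrow> real
    \<Rightarrow> (real \<Rightarrow> 'w \<Rightarrow> real) \<Rightarrow> (real \<Rightarrow> 'w \<Rightarrow> real) \<Rightarrow> (real \<Rightarrow> 'w \<Rightarrow> real) \<Rightarrow> bool" where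
  "sg_ito M F s T B h I \<longleftrightarrow>
     (\<forall>t\<in>{s..T}. I t \<in> borel_measurable (F t)) \<and>
     (\<forall>\<omega>\<in>space M. continuous_on {s..T} (\<lambda>t. I t \<omega>)) \<and>
     (let approx = (\<lambda>P. (\<forall>n. sg_simple M F s T (P n)) \<and>
            sg_conv_prob M (\<lambda>n \<omega>. \<integral>\<^sup>+ q. ennreal (indicator {s..T} q *
                   (sg_simple_val (P n) q \<omega> - h q \<omega>)\<^sup>2) \<partial>lborel)) in
      (\<exists>P. approx P) \<and>
      (\<forall>P. approx P \<longrightarrow>
         sg_conv_prob M (\<lambda>n \<omega>. SUP t\<in>{s..T}. ennreal \<bar>sg_simple_int (P n) B t \<omega> - I t \<omega>\<bar>)))"

definition sg_ito_vec :: "'w measure \<Rightarrow> (real \<Rightarrow> 'w measure) \<Rightarrow> real \<Rightarrow> real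
    \<Rightarrow> (real \<Rightarrow> 'w \<Rightarrow> real ^ 'm::finite) \<Rightarrow> (real \<Rightarrow> 'w \<Rightarrow> real ^ 'm ^ 'd::finite)
    \<Rightarrow> (real \<Rightarrow> 'w \<Rightarrow> real ^ 'd) \<Rightarrow> bool" where
  "sg_ito_vec M F s T W H I \<longleftrightarrow>
     (\<exists>J. (\<forall>i j. sg_ito M F s T (\<lambda>t \<omega>. W t \<omega> $ j) (\<lambda>t \<omega>. H t \<omega> $ i $ j) (J i j)) \<and>
          (\<forall>t\<in>{s..T}. \<forall>\<omega>\<in>space M. I t \<omega> = (\<chi> i. \<Sum>j\<in>UNIV. J i j t \<omega>)))"

definition sg_pred_sigma :: "'w measure \<Rightarrow> (real \<Rightarrow> 'w measure) \<Rightarrow> real \<Rightarrow> real \<Rightarrow> (real \<times> 'w) measure" where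
  "sg_pred_sigma M F s T = sigma ({s..T} \<times> space M)
     ({{s} \<times> A | A. A \<in> sets (F s)} \<union>
      {{a<..b} \<times> A | a b A. s \<le> a \<and> a < b \<and> b \<le> T \<and> A \<in> sets (F a)})"

definition sg_controls :: "'w measure \<Rightarrow> (real \<Rightarrow> 'w measure) \<Rightarrow> real \<Rightarrow> real
    \<Rightarrow> (real \<Rightarrow> 'w \<Rightarrow> 'u::topological_space) set" where
  "sg_controls M F s T = {u. (\<lambda>(t, \<omega>). u t \<omega>) \<in> measurable (sg_pred_sigma M F s T) borel}"

text \<open>C[s,T], represented by functions continuous on [s,T] and 0 outside.\<close>
definition sg_paths :: "real \<Rightarrow> real \<Rightarrow> (real \<Rightarrow> real ^ 'd::finite) set" where
  "sg_paths s T = {y. continuous_on {s..T} y \<and> (\<forall>q. q \<notin> {s..T} \<longrightarrow> y q = 0)}"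

definition sg_Bt :: "real \<Rightarrow> real \<Rightarrow> real \<Rightarrow> (real \<Rightarrow> real ^ 'd::finite) measure" where
  "sg_Bt s T t = sigma (sg_paths s T)
     {{y \<in> sg_paths s T. y q \<in> A} | q A. q \<in> {s..t} \<and> A \<in> sets (borel :: (real ^ 'd) measure)}"

definition sg_stopping_rule :: "real \<Rightarrow> real \<Rightarrow> ((real \<Rightarrow> real ^ 'd::finite) \<Rightarrow> real) \<Rightarrow> bool" where
  "sg_stopping_rule s T \<tau> \<longleftrightarrow> (\<forall>y\<in>sg_paths s T. \<tau> y \<in> {s..T}) \<and>
     (\<forall>t\<in>{s..T}. {y \<in> sg_paths s T. \<tau> y \<le> t} \<in> sets (sg_Bt s T t))"

definition sg_Bstop :: "real \<Rightarrow> real \<Rightarrow> ((real \<Rightarrow> real ^ 'd::finite) \<Rightarrow> real) \<Rightarrow> (real \<Rightarrow> real ^ 'd) measure" where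
  "sg_Bstop s T \<tau> = sigma (sg_paths s T)
     {A \<in> sets (sg_Bt s T T). \<forall>t\<in>{s..T}. A \<inter> {y \<in> sg_paths s T. \<tau> y \<le> t} \<in> sets (sg_Bt s T t)}"

definition sg_elem_cs :: "real \<Rightarrow> real \<Rightarrow> (real \<Rightarrow> (real \<Rightarrow> real ^ 'd::finite) \<Rightarrow> 'u::topological_space \<Rightarrow> 'v::topological_space) \<Rightarrow> bool" where
  "sg_elem_cs s T \<gamma> \<longleftrightarrow> (\<exists>(n::nat) \<tau> \<eta>.
     (\<forall>k\<le>n. sg_stopping_rule s T (\<tau> k)) \<and>
     (\<forall>y\<in>sg_paths s T. \<tau> 0 y = s \<and> \<tau> n y = T \<and> (\<forall>k<n. \<tau> k y \<le> \<tau> (Suc k) y)) \<and>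
     (\<forall>k\<in>{1..n}. (\<lambda>(y, u). \<eta> k y u) \<in> measurable (sg_Bstop s T (\<tau> (k - 1)) \<Otimes>\<^sub>M borel) borel) \<and>
     (\<forall>k\<in>{1..n}. \<forall>y\<in>sg_paths s T. \<forall>t u. \<tau> (k - 1) y < t \<and> t \<le> \<tau> k y \<longrightarrow> \<gamma> t y u = \<eta> k y u))"

definition sg_markov_cs :: "real \<Rightarrow> real \<Rightarrow> (real \<Rightarrow> (real \<Rightarrow> real ^ 'd::finite) \<Rightarrow> 'u::topological_space \<Rightarrow> 'v::topological_space) \<Rightarrow> bool" where
  "sg_markov_cs s T \<gamma> \<longleftrightarrow> (\<exists>ts \<eta>.
     ts \<noteq> [] \<and> ts ! 0 = s \<and> last ts = T \<and> sorted_wrt (<) ts \<and>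
     (\<forall>k. (\<lambda>(x, u). \<eta> k x u) \<in> measurable (borel \<Otimes>\<^sub>M borel) borel) \<and>
     (\<forall>k < length ts - 1. \<forall>t y u. ts ! k < t \<and> t \<le> ts ! (k+1) \<longrightarrow> \<gamma> t y u = \<eta> k (y (ts ! k)) u))"

definition sg_splice :: "real \<Rightarrow> (real ^ 'd \<Rightarrow> 'u \<Rightarrow> 'v) \<Rightarrow> (real \<Rightarrow> (real \<Rightarrow> real ^ 'd) \<Rightarrow> 'u \<Rightarrow> 'v)
    \<Rightarrow> (real \<Rightarrow> (real \<Rightarrow> real ^ 'd) \<Rightarrow> 'u \<Rightarrow> 'v)" where
  "sg_splice r \<eta> \<gamma> = (\<lambda>t y u. if t \<le> r then \<gamma> t y u else \<eta> (y r) u)"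

definition sg_path :: "real \<Rightarrow> real \<Rightarrow> (real \<Rightarrow> 'w \<Rightarrow> real ^ 'd) \<Rightarrow> 'w \<Rightarrow> real \<Rightarrow> real ^ 'd" where
  "sg_path s T X \<omega> = (\<lambda>q. if q \<in> {s..T} then X q \<omega> else 0)"

definition sg_strong_sol :: "'w measure \<Rightarrow> (real \<Rightarrow> 'w measure) \<Rightarrow> (real \<Rightarrow> 'w \<Rightarrow> real ^ 'm::finite)
    \<Rightarrow> (real \<Rightarrow> real ^ 'd::finite \<Rightarrow> 'u \<Rightarrow> 'v \<Rightarrow> real ^ 'd)
    \<Rightarrow> (real \<Rightarrow> real ^ 'd \<Rightarrow> 'u \<Rightarrow> 'v \<Rightarrow> real ^ 'm ^ 'd)
    \<Rightarrow> real \<Rightarrow> real \<Rightarrow> real ^ 'd \<Rightarrow> (real \<Rightarrow> 'w \<Rightarrow> 'u) \<Rightarrow> (real \<Rightarrow> (real \<Rightarrow> real ^ 'd) \<Rightarrow> 'u \<Rightarrow> 'v)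
    \<Rightarrow> (real \<Rightarrow> 'w \<Rightarrow> real ^ 'd) \<Rightarrow> bool" where
  "sg_strong_sol M F W b \<sigma> s T x u \<gamma> X \<longleftrightarrow>
     (\<forall>t\<in>{s..T}. X t \<in> borel_measurable (F t)) \<and>
     (\<forall>\<omega>\<in>space M. X s \<omega> = x \<and> continuous_on {s..T} (\<lambda>t. X t \<omega>)) \<and>
     (let v = (\<lambda>q \<omega>. \<gamma> q (sg_path s T X \<omega>) (u q \<omega>)) in
       (AE \<omega> in M. set_integrable lborel {s..T} (\<lambda>q. b q (X q \<omega>) (u q \<omega>) (v q \<omega>))) \<and>
       (AE \<omega> in M. (\<integral>\<^sup>+ q. ennreal (indicator {s..T} q * (norm (\<sigma> q (X q \<omega>) (u q \<omega>) (v q \<omega>)))\<^sup>2) \<partial>lborel) < \<infinity>) \<and>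
       (\<exists>I. sg_ito_vec M F s T W (\<lambda>q \<omega>. \<sigma> q (X q \<omega>) (u q \<omega>) (v q \<omega>)) I \<and>
          (\<forall>t\<in>{s..T}. AE \<omega> in M.
             X t \<omega> = x + set_lebesgue_integral lborel {s..t} (\<lambda>q. b q (X q \<omega>) (u q \<omega>) (v q \<omega>)) + I t \<omega>)))"

text \<open>Here Xsol s x u gamma is the state process X^{s,x;u,gamma} on the space (M s, F s, W s).\<close>
definition sg_vM :: "real \<Rightarrow> (real ^ 'd::finite \<Rightarrow> real) \<Rightarrow> (real \<Rightarrow> 'w measure) \<Rightarrow> (real \<Rightarrow> real \<Rightarrow> 'w measure)
    \<Rightarrow> (real \<Rightarrow> real ^ 'd \<Rightarrow> (real \<Rightarrow> 'w \<Rightarrow> 'u::topological_space) \<Rightarrow> (real \<Rightarrow> (real \<Rightarrow> real ^ 'd) \<Rightarrow> 'u \<Rightarrow> 'v::topological_space)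
        \<Rightarrow> real \<Rightarrow> 'w \<Rightarrow> real ^ 'd)
    \<Rightarrow> real \<Rightarrow> real ^ 'd \<Rightarrow> real" where
  "sg_vM T g M F Xsol s x =
     (INF \<gamma>\<in>{\<gamma>. sg_markov_cs s T \<gamma>}. SUP u\<in>sg_controls (M s) (F s) s T.
        integral\<^sup>L (M s) (\<lambda>\<omega>. g (Xsol s x u \<gamma> T \<omega>)))"

definition sg_asym_super :: "real \<Rightarrow> (real ^ 'd::finite \<Rightarrow> real) \<Rightarrow> (real \<Rightarrow> 'w measure) \<Rightarrow> (real \<Rightarrow> real \<Rightarrow> 'w measure)
    \<Rightarrow> (real \<Rightarrow> real ^ 'd \<Rightarrow> (real \<Rightarrow> 'w \<Rightarrow> 'u::topological_space) \<Rightarrow> (real \<Rightarrow> (real \<Rightarrow> real ^ 'd) \<Rightarrow> 'u \<Rightarrow> 'v::topological_space)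
        \<Rightarrow> real \<Rightarrow> 'w \<Rightarrow> real ^ 'd)
    \<Rightarrow> (real \<Rightarrow> real ^ 'd \<Rightarrow> real) \<Rightarrow> bool" where
  "sg_asym_super T g M F Xsol w \<longleftrightarrow>
     bounded ((\<lambda>(t, x). w t x) ` ({0..T} \<times> UNIV)) \<and>
     continuous_on ({0..T} \<times> UNIV) (\<lambda>(t, x). w t x) \<and>
     (\<forall>x. w T x \<ge> g x) \<and>
     (\<exists>\<phi> :: real \<Rightarrow> real. (\<forall>e>0. \<phi> e > 0) \<and> (\<phi> \<longlongrightarrow> 0) (at_right 0) \<and>
       (\<forall>s\<in>{0..T}. \<forall>r\<in>{s..T}. \<exists>\<eta> :: real ^ 'd \<Rightarrow> 'u \<Rightarrow> 'v.
          (\<lambda>(x, u). \<eta> x u) \<in> measurable (borel \<Otimes>\<^sub>M borel) borel \<and>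
          (\<forall>x \<gamma> u t. sg_elem_cs s T \<gamma> \<and> u \<in> sg_controls (M s) (F s) s T \<and> t \<in> {r..T} \<longrightarrow>
             (AE \<omega> in M s. w r (Xsol s x u \<gamma> r \<omega>) \<ge>
                real_cond_exp (M s) (F s r) (\<lambda>\<omega>'. w t (Xsol s x u (sg_splice r \<eta> \<gamma>) t \<omega>')) \<omega>
                - (t - r) * \<phi> (t - r)))))"

end

theory Submission
  imports Defs
begin


lemma Bt_sets_gen:
  fixes A :: "(real ^ 'd::finite) set"
  assumes "q \<in> {s..t}" "A \<in> sets borel"
  shows "{y \<in> sg_paths s T. y q \<in> A} \<in> sets (sg_Bt s T t :: (real \<Rightarrow> real ^ 'd) measure)"
proof -
  have sub: "{{y \<in> sg_paths s T. y q \<in> A} | q A. q \<in> {s..t} \<and> A \<in> sets (borel :: (real ^ 'd) measure)}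
     \<subseteq> Pow (sg_paths s T)" by auto
  show ?thesis unfolding sg_Bt_def sets_measure_of[OF sub]
    by (rule sigma_sets.Basic) (use assms in blast)
qed

lemma Bt_space: "space (sg_Bt s T t) = sg_paths s T"
  unfolding sg_Bt_def by (simp add: space_measure_of_conv)

lemma const_stopping: "c \<in> {s..T} \<Longrightarrow> sg_stopping_rule s T (\<lambda>y::real \<Rightarrow> real ^ 'd::finite. c)"
proof -
  assume c: "c \<in> {s..T}"
  have "{y \<in> sg_paths s T. c \<le> t} \<in> sets (sg_Bt s T t :: (real \<Rightarrow> real ^ 'd) measure)" for t
  proof (cases "c \<le> t")
    case True
    then have "{y \<in> sg_paths s T. c \<le> t} = space (sg_Bt s T t :: (real \<Rightarrow> real ^ 'd) measure)"
      by (simp add: Bt_space)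
    then show ?thesis by simp
  next
    case False
    then show ?thesis by simp
  qed
  then show ?thesis unfolding sg_stopping_rule_def using c by blast
qed

lemma eval_meas_Bstop:
  assumes "s \<le> q" "q \<le> c" "c \<le> T"
  shows "(\<lambda>y. y q) \<in> borel_measurable (sg_Bstop s T (\<lambda>y::real \<Rightarrow> real ^ 'd::finite. c))"
proof (rule borel_measurableI)
  fix S :: "(real ^ 'd) set" assume "open S"
  let ?G = "{A \<in> sets (sg_Bt s T T). \<forall>t\<in>{s..T}. A \<inter> {y \<in> sg_paths s T. c \<le> t} \<in> sets (sg_Bt s T t)}
     :: (real \<Rightarrow> real ^ 'd) set set"
  have sub: "?G \<subseteq> Pow (sg_paths s T)"
    using sets.sets_into_space[of _ "sg_Bt s T T"] by (auto simp: Bt_space)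
  have sp: "space (sg_Bstop s T (\<lambda>y::real \<Rightarrow> real ^ 'd::finite. c)) = sg_paths s T"
    unfolding sg_Bstop_def by (simp add: space_measure_of_conv)
  have eq: "(\<lambda>y. y q) -` S \<inter> sg_paths s T = {y \<in> sg_paths s T. y q \<in> S}" by auto
  have bor: "S \<in> sets borel" using \<open>open S\<close> by simp
  have "{y \<in> sg_paths s T. y q \<in> S} \<in> ?G"
  proof -
    have "{y \<in> sg_paths s T. y q \<in> S} \<in> sets (sg_Bt s T T :: (real \<Rightarrow> real ^ 'd) measure)"
      by (rule Bt_sets_gen) (use assms bor in auto)
    moreover have "{y \<in> sg_paths s T. y q \<in> S} \<inter> {y \<in> sg_paths s T. c \<le> t}
        \<in> sets (sg_Bt s T t :: (real \<Rightarrow> real ^ 'd) measure)" if "t \<in> {s..T}" for t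
    proof (cases "c \<le> t")
      case True
      then have "{y \<in> sg_paths s T. y q \<in> S} \<inter> {y \<in> sg_paths s T. c \<le> t} = {y \<in> sg_paths s T. y q \<in> S}"
        by auto
      moreover have "{y \<in> sg_paths s T. y q \<in> S} \<in> sets (sg_Bt s T t :: (real \<Rightarrow> real ^ 'd) measure)"
        by (rule Bt_sets_gen) (use assms bor True in auto)
      ultimately show ?thesis by simp
    next
      case False then show ?thesis by simp
    qed
    ultimately show ?thesis by blast
  qed
  then show "(\<lambda>y. y q) -` S \<inter> space (sg_Bstop s T (\<lambda>y::real \<Rightarrow> real ^ 'd::finite. c))
       \<in> sets (sg_Bstop s T (\<lambda>y::real \<Rightarrow> real ^ 'd::finite. c))"
    unfolding sp eq unfolding sg_Bstop_def sets_measure_of[OF sub] by (rule sigma_sets.Basic)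
qed

lemma eta_meas_Bstop:
  fixes \<eta> :: "real ^ 'd::finite \<Rightarrow> 'u::topological_space \<Rightarrow> 'v::topological_space"
  assumes "s \<le> q" "q \<le> c" "c \<le> T"
    and m: "(\<lambda>(x, u). \<eta> x u) \<in> measurable (borel \<Otimes>\<^sub>M borel) borel"
  shows "(\<lambda>(y, u). \<eta> (y q) u) \<in> measurable (sg_Bstop s T (\<lambda>y::real \<Rightarrow> real ^ 'd. c) \<Otimes>\<^sub>M borel) borel"
proof -
  have e: "(\<lambda>y. y q) \<in> borel_measurable (sg_Bstop s T (\<lambda>y::real \<Rightarrow> real ^ 'd::finite. c))"
    by (rule eval_meas_Bstop) (use assms in auto)
  have p: "(\<lambda>p. (fst p q, snd p)) \<in> measurable (sg_Bstop s T (\<lambda>y::real \<Rightarrow> real ^ 'd. c) \<Otimes>\<^sub>M (borel :: 'u measure)) (borel \<Otimes>\<^sub>M borel)"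
    apply (rule measurable_Pair)
     apply (rule measurable_compose[OF measurable_fst e])
    apply (rule measurable_snd)
    done
  have "(\<lambda>(y, u). \<eta> (y q) u) = (\<lambda>(x, u). \<eta> x u) \<circ> (\<lambda>p. (fst p q, snd p))" by auto
  then show ?thesis using measurable_comp[OF p m] by simp
qed

lemma elem_grid:
  fixes \<gamma> :: "real \<Rightarrow> (real \<Rightarrow> real ^ 'd::finite) \<Rightarrow> 'u::topological_space \<Rightarrow> 'v::topological_space"
  assumes c0: "c 0 = s" and cN: "c N = T"
    and cmono: "\<And>k. k < N \<Longrightarrow> c k \<le> c (Suc k)"
    and crange: "\<And>k. k \<le> N \<Longrightarrow> c k \<in> {s..T}"
    and fm: "\<And>k. k \<in> {1..N} \<Longrightarrow> (\<lambda>(y, u). f k y u) \<in> measurable (sg_Bstop s T (\<lambda>y::real \<Rightarrow> real ^ 'd. c (k - 1)) \<Otimes>\<^sub>M borel) borel"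
    and feq: "\<And>k y t u. k \<in> {1..N} \<Longrightarrow> c (k - 1) < t \<Longrightarrow> t \<le> c k \<Longrightarrow> \<gamma> t y u = f k y u"
  shows "sg_elem_cs s T \<gamma>"
  unfolding sg_elem_cs_def
  apply (rule exI[of _ N], rule exI[of _ "\<lambda>k (y::real \<Rightarrow> real ^ 'd). c k"], rule exI[of _ f])
proof (intro conjI)
  show "\<forall>k\<le>N. sg_stopping_rule s T (\<lambda>y::real \<Rightarrow> real ^ 'd. c k)"
    using crange const_stopping by blast
  show "\<forall>y\<in>sg_paths s T. c 0 = s \<and> c N = T \<and> (\<forall>k<N. c k \<le> c (Suc k))"
    using c0 cN cmono by blast
  show "\<forall>k\<in>{1..N}. (\<lambda>(y, u). f k y u) \<in> measurable (sg_Bstop s T (\<lambda>y::real \<Rightarrow> real ^ 'd. c (k - 1)) \<Otimes>\<^sub>M borel) borel"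
    using fm by blast
  show "\<forall>k\<in>{1..N}. \<forall>y\<in>sg_paths s T. \<forall>t u. c (k - 1) < t \<and> t \<le> c k \<longrightarrow> \<gamma> t y u = f k y u"
    using feq by blast
qed



primrec Gseq :: "(nat \<Rightarrow> real) \<Rightarrow> (real \<Rightarrow> real ^ 'd::finite \<Rightarrow> 'u \<Rightarrow> 'v) \<Rightarrow> 'v \<Rightarrow> nat
    \<Rightarrow> real \<Rightarrow> (real \<Rightarrow> real ^ 'd) \<Rightarrow> 'u \<Rightarrow> 'v" where
  "Gseq t \<eta> v0 0 = (\<lambda>_ _ _. v0)"
| "Gseq t \<eta> v0 (Suc k) = sg_splice (t k) (\<eta> (t k)) (Gseq t \<eta> v0 k)"

lemma Gseq_val:
  assumes mono: "\<And>i j. i < j \<Longrightarrow> t i < (t j :: real)"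
  shows "i < k \<Longrightarrow> t i < \<tau> \<Longrightarrow> (\<tau> \<le> t (Suc i) \<or> i = k - 1) \<Longrightarrow>
    Gseq t \<eta> v0 k \<tau> y u = \<eta> (t i) (y (t i)) u"
proof (induction k arbitrary: i)
  case 0 then show ?case by simp
next
  case (Suc k)
  show ?case
  proof (cases "i = k")
    case True
    then show ?thesis using Suc.prems by (simp add: sg_splice_def)
  next
    case False
    then have ik: "i < k" using Suc.prems by simp
    then have le: "\<tau> \<le> t (Suc i)" using Suc.prems False by simp
    have "t (Suc i) \<le> t k"
      using ik mono[of "Suc i" k] by (cases "Suc i = k") auto
    then have "\<tau> \<le> t k" using le by simp
    then have "Gseq t \<eta> v0 (Suc k) \<tau> y u = Gseq t \<eta> v0 k \<tau> y u" by (simp add: sg_splice_def)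
    also have "\<dots> = \<eta> (t i) (y (t i)) u" using Suc.IH[of i] ik Suc.prems le by simp
    finally show ?thesis .
  qed
qed

lemma Gseq_elem:
  fixes \<eta> :: "real \<Rightarrow> real ^ 'd::finite \<Rightarrow> 'u::topological_space \<Rightarrow> 'v::topological_space"
  assumes mono: "\<And>i j. i < j \<Longrightarrow> t i < (t j :: real)"
    and t0: "t 0 = s" and tn: "t n = T"
    and meas: "\<And>i. i \<le> n \<Longrightarrow> (\<lambda>(x, u). \<eta> (t i) x u) \<in> measurable (borel \<Otimes>\<^sub>M borel) borel"
  shows "sg_elem_cs s T (Gseq t \<eta> v0 k)"
proof -
  have mono': "i \<le> j \<Longrightarrow> t i \<le> t j" for i j using mono[of i j] by (cases "i = j") auto
  have rng: "i \<le> n \<Longrightarrow> t i \<in> {s..T}" for i using mono'[of 0 i] mono'[of i n] t0 tn by auto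
  have val: "Gseq t \<eta> v0 k \<tau> y u = \<eta> (t (min (j - 1) (k - 1))) (y (t (min (j - 1) (k - 1)))) u"
    if "k \<noteq> 0" "j \<in> {1..n}" "t (j - 1) < \<tau>" "\<tau> \<le> t j" for \<tau> y u j
  proof (rule Gseq_val[OF mono])
    let ?i = "min (j - 1) (k - 1)"
    show "?i < k" using that by simp
    have "t ?i \<le> t (j - 1)" by (rule mono') simp
    then show "t ?i < \<tau>" using that by simp
    show "\<tau> \<le> t (Suc ?i) \<or> ?i = k - 1"
      using that by (cases "j - 1 \<le> k - 1") (auto simp: min_def)
  qed
  show ?thesis
  proof (rule elem_grid[where c = t and N = n and f = "\<lambda>j. Gseq t \<eta> v0 k (t j)"])
    show "t 0 = s" "t n = T" by (fact t0, fact tn)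
    show "\<And>k. k < n \<Longrightarrow> t k \<le> t (Suc k)" using mono' by simp
    show "\<And>k. k \<le> n \<Longrightarrow> t k \<in> {s..T}" by (rule rng)
  next
    fix j assume j: "j \<in> {1..n}"
    show "(\<lambda>(y, u). Gseq t \<eta> v0 k (t j) y u)
         \<in> measurable (sg_Bstop s T (\<lambda>y::real \<Rightarrow> real ^ 'd. t (j - 1)) \<Otimes>\<^sub>M borel) borel"
    proof (cases "k = 0")
      case True then show ?thesis by simp
    next
      case False
      let ?i = "min (j - 1) (k - 1)"
      have tj: "t (j - 1) < t j" using j mono by simp
      have eq: "(\<lambda>(y, u). Gseq t \<eta> v0 k (t j) y u) = (\<lambda>(y, u). \<eta> (t ?i) (y (t ?i)) u)"
        using val[OF False j tj order.refl] by auto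
      show ?thesis unfolding eq
      proof (rule eta_meas_Bstop)
        show "s \<le> t ?i" using rng[of ?i] j by auto
        show "t ?i \<le> t (j - 1)" by (rule mono') simp
        show "t (j - 1) \<le> T" using rng[of "j - 1"] j by auto
        show "(\<lambda>(x, u). \<eta> (t ?i) x u) \<in> measurable (borel \<Otimes>\<^sub>M borel) borel"
          using meas[of ?i] j by auto
      qed
    qed
  next
    fix j y \<tau> u assume j: "j \<in> {1..n}" and a: "t (j - 1) < \<tau>" "\<tau> \<le> t j"
    show "Gseq t \<eta> v0 k \<tau> y u = Gseq t \<eta> v0 k (t j) y u"
    proof (cases "k = 0")
      case True then show ?thesis by simp
    next
      case False
      have tj: "t (j - 1) < t j" using j mono by simp
      show ?thesis using val[OF False j a] val[OF False j tj order.refl] by simp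
    qed
  qed
qed

lemma Gseq_markov:
  fixes \<eta> :: "real \<Rightarrow> real ^ 'd::finite \<Rightarrow> 'u::topological_space \<Rightarrow> 'v::topological_space"
  assumes mono: "\<And>i j. i < j \<Longrightarrow> t i < (t j :: real)"
    and t0: "t 0 = s" and tn: "t n = T"
    and meas: "\<And>i. i \<le> n \<Longrightarrow> (\<lambda>(x, u). \<eta> (t i) x u) \<in> measurable (borel \<Otimes>\<^sub>M borel) borel"
  shows "sg_markov_cs s T (Gseq t \<eta> v0 n)"
  unfolding sg_markov_cs_def
proof (intro exI conjI)
  let ?ts = "map t [0..<Suc n]"
  show "?ts \<noteq> []" by simp
  show "?ts ! 0 = s" using t0 by (simp del: upt_Suc)
  show "last ?ts = T" using tn by simp
  show "sorted_wrt (<) ?ts"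
    unfolding sorted_wrt_map
    by (rule sorted_wrt_mono_rel[OF _ sorted_wrt_upt]) (use mono in auto)
  show "\<forall>k. (\<lambda>(x, u). \<eta> (t (min k n)) x u) \<in> measurable (borel \<Otimes>\<^sub>M borel) borel"
    using meas by simp
  show "\<forall>k < length ?ts - 1. \<forall>\<tau> y u. ?ts ! k < \<tau> \<and> \<tau> \<le> ?ts ! (k+1) \<longrightarrow>
      Gseq t \<eta> v0 n \<tau> y u = \<eta> (t (min k n)) (y (?ts ! k)) u"
  proof (intro allI impI)
    fix k \<tau> y u assume k: "k < length ?ts - 1" and a: "?ts ! k < \<tau> \<and> \<tau> \<le> ?ts ! (k+1)"
    have kn: "k < n" using k by simp
    have nth1: "?ts ! k = t k" using kn by (simp del: upt_Suc)
    have nth2: "?ts ! (k+1) = t (Suc k)" using kn by (simp del: upt_Suc)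
    show "Gseq t \<eta> v0 n \<tau> y u = \<eta> (t (min k n)) (y (?ts ! k)) u"
    proof -
      have "Gseq t \<eta> v0 n \<tau> y u = \<eta> (t k) (y (t k)) u"
        by (rule Gseq_val[OF mono]) (use a kn nth1 nth2 in auto)
      then show ?thesis using kn nth1 by simp
    qed
  qed
qed

lemma integral_abs_le:
  fixes f :: "'a \<Rightarrow> real"
  assumes "prob_space M" "\<And>\<omega>. \<omega> \<in> space M \<Longrightarrow> \<bar>f \<omega>\<bar> \<le> B"
  shows "\<bar>integral\<^sup>L M f\<bar> \<le> B"
proof -
  interpret prob_space M by fact
  obtain \<omega> where "\<omega> \<in> space M" using not_empty by blast
  then have B0: "0 \<le> B" using assms(2) by force
  show ?thesis
  proof (cases "integrable M f")
    case True
    have "\<bar>integral\<^sup>L M f\<bar> \<le> (\<integral>\<omega>. \<bar>f \<omega>\<bar> \<partial>M)"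
      using integral_norm_bound[of M f] by simp
    also have "\<dots> \<le> (\<integral>\<omega>. B \<partial>M)"
      by (rule integral_mono) (use True assms(2) in auto)
    also have "\<dots> = B" by (simp add: prob_space)
    finally show ?thesis .
  next
    case False then show ?thesis using B0 by (simp add: not_integrable_integral_eq)
  qed
qed

lemma integrable_comp_bdd:
  fixes f :: "'b::topological_space \<Rightarrow> real"
  assumes "prob_space M" "subalgebra M F" "X \<in> borel_measurable F"
    "continuous_on UNIV f" "\<And>z. \<bar>f z\<bar> \<le> B"
  shows "integrable M (\<lambda>\<omega>. f (X \<omega>))"
proof -
  interpret prob_space M by fact
  have "X \<in> borel_measurable M" by (rule measurable_from_subalg[OF assms(2,3)])
  then have m: "(\<lambda>\<omega>. f (X \<omega>)) \<in> borel_measurable M"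
    by (rule borel_measurable_continuous_on[OF assms(4)])
  show ?thesis
    by (rule integrable_const_bound[where B = B]) (use assms(5) m in auto)
qed

lemma chain_step:
  fixes a b :: "'a \<Rightarrow> real"
  assumes "prob_space M" "subalgebra M F" "integrable M a" "integrable M b"
    "AE \<omega> in M. a \<omega> \<ge> real_cond_exp M F b \<omega> - c"
  shows "integral\<^sup>L M b - c \<le> integral\<^sup>L M a"
proof -
  interpret prob_space M by fact
  interpret finite_measure_subalgebra M F
    by unfold_locales (use assms(2) in auto)
  have ci: "integrable M (real_cond_exp M F b)" "(\<integral>x. real_cond_exp M F b x \<partial>M) = (\<integral>x. b x \<partial>M)"
    using real_cond_exp_int[OF assms(4)] by auto
  have "integral\<^sup>L M b - c = (\<integral>\<omega>. real_cond_exp M F b \<omega> - c \<partial>M)"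
    using ci by (simp add: prob_space)
  also have "\<dots> \<le> integral\<^sup>L M a"
    by (rule integral_mono_AE) (use ci assms in auto)
  finally show ?thesis .
qed



theorem proposition3p3:
  fixes T :: real
    and b :: "real \<Rightarrow> real ^ 'd::finite \<Rightarrow> 'u::metric_space \<Rightarrow> 'v::metric_space \<Rightarrow> real ^ 'd"
    and \<sigma> :: "real \<Rightarrow> real ^ 'd \<Rightarrow> 'u \<Rightarrow> 'v \<Rightarrow> real ^ 'm::finite ^ 'd"
    and g :: "real ^ 'd \<Rightarrow> real"
    and M :: "real \<Rightarrow> 'w measure"
    and F :: "real \<Rightarrow> real \<Rightarrow> 'w measure"
    and W :: "real \<Rightarrow> real \<Rightarrow> 'w \<Rightarrow> real ^ 'm"
    and Xsol :: "real \<Rightarrow> real ^ 'd \<Rightarrow> (real \<Rightarrow> 'w \<Rightarrow> 'u) \<Rightarrow> (real \<Rightarrow> (real \<Rightarrow> real ^ 'd) \<Rightarrow> 'u \<Rightarrow> 'v)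
                 \<Rightarrow> real \<Rightarrow> 'w \<Rightarrow> real ^ 'd"
    and w :: "real \<Rightarrow> real ^ 'd \<Rightarrow> real"
  assumes T_pos: "0 < T"
    and U_compact: "compact (UNIV :: 'u set)"
    and V_compact: "compact (UNIV :: 'v set)"
    and b_cont: "continuous_on ({0..T} \<times> UNIV \<times> UNIV \<times> UNIV) (\<lambda>(t, x, u, v). b t x u v)"
    and \<sigma>_cont: "continuous_on ({0..T} \<times> UNIV \<times> UNIV \<times> UNIV) (\<lambda>(t, x, u, v). \<sigma> t x u v)"
    and loc_lip: "\<forall>R. \<exists>L. \<forall>t\<in>{0..T}. \<forall>x y u v. norm x \<le> R \<and> norm y \<le> R \<longrightarrow>
                    norm (b t x u v - b t y u v) \<le> L * norm (x - y) \<and>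
                    norm (\<sigma> t x u v - \<sigma> t y u v) \<le> L * norm (x - y)"
    and lin_growth: "\<exists>C. \<forall>t\<in>{0..T}. \<forall>x u v. norm (b t x u v) + norm (\<sigma> t x u v) \<le> C * (1 + norm x)"
    and g_cont: "continuous_on UNIV g"
    and g_bdd: "bounded (range g)"
    and spaces: "\<forall>s\<in>{0..T}. sg_filt_usual (M s) (F s) s T \<and> sg_brownian (M s) (F s) s T (W s)"
    and solutions: "\<forall>s\<in>{0..T}. \<forall>x u \<gamma>. u \<in> sg_controls (M s) (F s) s T \<and> sg_elem_cs s T \<gamma> \<longrightarrow>
                      sg_strong_sol (M s) (F s) (W s) b \<sigma> s T x u \<gamma> (Xsol s x u \<gamma>)"
    and super: "sg_asym_super T g M F Xsol w"
  shows "\<forall>s\<in>{0..T}. \<forall>x. sg_vM T g M F Xsol s x \<le> w s x"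
proof (intro ballI allI)
  fix s x assume s: "s \<in> {0..T}"
  obtain \<phi> :: "real \<Rightarrow> real" where
    wbdd: "bounded ((\<lambda>(t, x). w t x) ` ({0..T} \<times> UNIV))" and
    wcont: "continuous_on ({0..T} \<times> UNIV) (\<lambda>(t, x). w t x)" and
    wg: "\<forall>x. w T x \<ge> g x" and
    philim: "(\<phi> \<longlongrightarrow> 0) (at_right 0)" and
    hsup: "\<forall>s\<in>{0..T}. \<forall>r\<in>{s..T}. \<exists>\<eta> :: real ^ 'd \<Rightarrow> 'u \<Rightarrow> 'v.
          (\<lambda>(x, u). \<eta> x u) \<in> measurable (borel \<Otimes>\<^sub>M borel) borel \<and>
          (\<forall>x \<gamma> u t. sg_elem_cs s T \<gamma> \<and> u \<in> sg_controls (M s) (F s) s T \<and> t \<in> {r..T} \<longrightarrow>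
             (AE \<omega> in M s. w r (Xsol s x u \<gamma> r \<omega>) \<ge>
                real_cond_exp (M s) (F s r) (\<lambda>\<omega>'. w t (Xsol s x u (sg_splice r \<eta> \<gamma>) t \<omega>')) \<omega>
                - (t - r) * \<phi> (t - r)))"
    using super unfolding sg_asym_super_def by blast
  obtain \<eta>f :: "real \<Rightarrow> real ^ 'd \<Rightarrow> 'u \<Rightarrow> 'v" where h\<eta>:
    "\<forall>r\<in>{s..T}. (\<lambda>(x, u). \<eta>f r x u) \<in> measurable (borel \<Otimes>\<^sub>M borel) borel \<and>
          (\<forall>x \<gamma> u t. sg_elem_cs s T \<gamma> \<and> u \<in> sg_controls (M s) (F s) s T \<and> t \<in> {r..T} \<longrightarrow>
             (AE \<omega> in M s. w r (Xsol s x u \<gamma> r \<omega>) \<ge>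
                real_cond_exp (M s) (F s r) (\<lambda>\<omega>'. w t (Xsol s x u (sg_splice r (\<eta>f r) \<gamma>) t \<omega>')) \<omega>
                - (t - r) * \<phi> (t - r)))"
    using bchoice[OF bspec[OF hsup s]] by blast
  obtain Bw where Bw: "\<And>t z. t \<in> {0..T} \<Longrightarrow> \<bar>w t z\<bar> \<le> Bw"
    using wbdd unfolding bounded_iff by fastforce
  obtain Bg where Bg: "\<And>z. \<bar>g z\<bar> \<le> Bg"
    using g_bdd unfolding bounded_iff by fastforce
  have wtc: "continuous_on UNIV (w t)" if "t \<in> {0..T}" for t
  proof -
    have "continuous_on UNIV ((\<lambda>(t, x). w t x) \<circ> (\<lambda>z. (t, z)))"
      by (rule continuous_on_compose[OF continuous_on_Pair[OF continuous_on_const continuous_on_id]])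
         (rule continuous_on_subset[OF wcont], use that in auto)
    then show ?thesis by (simp add: o_def)
  qed
  have ps: "prob_space (M s)" and subalg: "\<And>t. t \<in> {s..T} \<Longrightarrow> subalgebra (M s) (F s t)"
    using spaces s unfolding sg_filt_usual_def by auto
  interpret prob_space "M s" by (fact ps)
  define v0 :: 'v where "v0 = undefined"
  let ?C = "sg_controls (M s) (F s) s T :: (real \<Rightarrow> 'w \<Rightarrow> 'u) set"
  have key: "integral\<^sup>L (M s) (\<lambda>\<omega>. g (Xsol s x u (Gseq tt \<eta>f v0 n) T \<omega>)) \<le> w s x + real n * (h * \<phi> h)"
    if tt: "\<And>i j. i < j \<Longrightarrow> tt i < tt j" "tt 0 = s" "tt n = T" "\<And>k. tt (Suc k) - tt k = h"
      and u: "u \<in> ?C" for tt n h u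
  proof -
    have mono': "i \<le> j \<Longrightarrow> tt i \<le> tt j" for i j using tt(1)[of i j] by (cases "i = j") auto
    have rng: "i \<le> n \<Longrightarrow> tt i \<in> {s..T}" for i using mono'[of 0 i] mono'[of i n] tt by auto
    have meas: "\<And>i. i \<le> n \<Longrightarrow> (\<lambda>(x, u). \<eta>f (tt i) x u) \<in> measurable (borel \<Otimes>\<^sub>M borel) borel"
      using h\<eta> rng by blast
    have elem: "sg_elem_cs s T (Gseq tt \<eta>f v0 k)" for k
      by (rule Gseq_elem[where t=tt and \<eta>=\<eta>f and n=n]) (use tt meas in auto)
    have sol: "sg_strong_sol (M s) (F s) (W s) b \<sigma> s T x u (Gseq tt \<eta>f v0 k) (Xsol s x u (Gseq tt \<eta>f v0 k))" for k
      using solutions s u elem by blast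
    have Xmeas: "Xsol s x u (Gseq tt \<eta>f v0 k) \<tau> \<in> borel_measurable (F s \<tau>)" if "\<tau> \<in> {s..T}" for k \<tau>
      using sol[of k] that unfolding sg_strong_sol_def by blast
    have Xinit: "Xsol s x u (Gseq tt \<eta>f v0 k) s \<omega> = x" if "\<omega> \<in> space (M s)" for k \<omega>
      using sol[of k] that unfolding sg_strong_sol_def by blast
    have sT: "{s..T} \<subseteq> {0..T}" using s by auto
    have int: "integrable (M s) (\<lambda>\<omega>. w \<tau> (Xsol s x u (Gseq tt \<eta>f v0 k) \<tau> \<omega>))" if "\<tau> \<in> {s..T}" for k \<tau>
      by (rule integrable_comp_bdd[OF ps subalg[OF that] Xmeas[OF that] wtc Bw]) (use that sT in auto)
    define E where "E k = integral\<^sup>L (M s) (\<lambda>\<omega>. w (tt k) (Xsol s x u (Gseq tt \<eta>f v0 k) (tt k) \<omega>))" for k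
    have chain: "k \<le> n \<Longrightarrow> E k \<le> w s x + real k * (h * \<phi> h)" for k
    proof (induction k)
      case 0
      have "E 0 = integral\<^sup>L (M s) (\<lambda>\<omega>. w s x)"
        unfolding E_def tt(2) by (rule Bochner_Integration.integral_cong) (simp_all add: Xinit del: Gseq.simps)
      also have "\<dots> = w s x" by (simp add: prob_space)
      finally show ?case by simp
    next
      case (Suc k)
      have kn: "k \<le> n" using Suc by simp
      have r: "tt k \<in> {s..T}" by (rule rng[OF kn])
      have t2: "tt (Suc k) \<in> {tt k..T}" using rng[OF Suc.prems] mono'[of k "Suc k"] by auto
      have AE: "AE \<omega> in M s. w (tt k) (Xsol s x u (Gseq tt \<eta>f v0 k) (tt k) \<omega>) \<ge>
                real_cond_exp (M s) (F s (tt k)) (\<lambda>\<omega>'. w (tt (Suc k)) (Xsol s x u (sg_splice (tt k) (\<eta>f (tt k)) (Gseq tt \<eta>f v0 k)) (tt (Suc k)) \<omega>')) \<omega>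
                - (tt (Suc k) - tt k) * \<phi> (tt (Suc k) - tt k)"
        using h\<eta> r elem[of k] u t2 by blast
      then have AE': "AE \<omega> in M s. w (tt k) (Xsol s x u (Gseq tt \<eta>f v0 k) (tt k) \<omega>) \<ge>
                real_cond_exp (M s) (F s (tt k)) (\<lambda>\<omega>'. w (tt (Suc k)) (Xsol s x u (Gseq tt \<eta>f v0 (Suc k)) (tt (Suc k)) \<omega>')) \<omega>
                - h * \<phi> h"
        using tt(4)[of k] by simp
      have "E (Suc k) - h * \<phi> h \<le> E k"
        unfolding E_def
        by (rule chain_step[OF ps subalg[OF r] int[OF r] int[OF rng[OF Suc.prems]] AE'])
      then show ?case using Suc.IH[OF kn] by (simp add: algebra_simps)
    qed
    have Tin: "T \<in> {s..T}" using s by auto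
    have "integral\<^sup>L (M s) (\<lambda>\<omega>. g (Xsol s x u (Gseq tt \<eta>f v0 n) T \<omega>))
        \<le> integral\<^sup>L (M s) (\<lambda>\<omega>. w T (Xsol s x u (Gseq tt \<eta>f v0 n) T \<omega>))"
      by (rule integral_mono[OF integrable_comp_bdd[OF ps subalg[OF Tin] Xmeas[OF Tin] g_cont Bg] int[OF Tin]])
         (use wg in auto)
    also have "\<dots> = E n" unfolding E_def tt(3) ..
    also have "\<dots> \<le> w s x + real n * (h * \<phi> h)" by (rule chain) simp
    finally show ?thesis .
  qed
  have Cne: "?C \<noteq> {}"
  proof -
    have "(\<lambda>t \<omega>. undefined) \<in> ?C" unfolding sg_controls_def by (simp add: split_def)
    then show ?thesis by blast
  qed
  have bddA: "bdd_above ((\<lambda>u. integral\<^sup>L (M s) (\<lambda>\<omega>. g (Xsol s x u \<gamma> T \<omega>))) ` ?C)" for \<gamma>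
  proof (rule bdd_aboveI2)
    fix u show "integral\<^sup>L (M s) (\<lambda>\<omega>. g (Xsol s x u \<gamma> T \<omega>)) \<le> Bg"
      using integral_abs_le[OF ps, of "\<lambda>\<omega>. g (Xsol s x u \<gamma> T \<omega>)" Bg] Bg by auto
  qed
  have bddB: "bdd_below ((\<lambda>\<gamma>. SUP u\<in>?C. integral\<^sup>L (M s) (\<lambda>\<omega>. g (Xsol s x u \<gamma> T \<omega>))) ` {\<gamma>. sg_markov_cs s T \<gamma>})"
  proof (rule bdd_belowI2)
    fix \<gamma> :: "real \<Rightarrow> (real \<Rightarrow> real ^ 'd) \<Rightarrow> 'u \<Rightarrow> 'v"
    obtain u0 where u0: "u0 \<in> ?C" using Cne by blast
    have "- Bg \<le> integral\<^sup>L (M s) (\<lambda>\<omega>. g (Xsol s x u0 \<gamma> T \<omega>))"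
      using integral_abs_le[OF ps, of "\<lambda>\<omega>. g (Xsol s x u0 \<gamma> T \<omega>)" Bg] Bg by auto
    also have "\<dots> \<le> (SUP u\<in>?C. integral\<^sup>L (M s) (\<lambda>\<omega>. g (Xsol s x u \<gamma> T \<omega>)))"
      by (rule cSUP_upper[OF u0 bddA])
    finally show "- Bg \<le> (SUP u\<in>?C. integral\<^sup>L (M s) (\<lambda>\<omega>. g (Xsol s x u \<gamma> T \<omega>)))" .
  qed
  have vbound: "sg_vM T g M F Xsol s x \<le> w s x + real n * (h * \<phi> h)"
    if tt: "\<And>i j. i < j \<Longrightarrow> tt i < tt j" "tt 0 = s" "tt n = T" "\<And>k. tt (Suc k) - tt k = h" for tt n h
  proof -
    have mono': "i \<le> j \<Longrightarrow> tt i \<le> tt j" for i j using tt(1)[of i j] by (cases "i = j") auto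
    have rng: "i \<le> n \<Longrightarrow> tt i \<in> {s..T}" for i using mono'[of 0 i] mono'[of i n] tt by auto
    have meas: "\<And>i. i \<le> n \<Longrightarrow> (\<lambda>(x, u). \<eta>f (tt i) x u) \<in> measurable (borel \<Otimes>\<^sub>M borel) borel"
      using h\<eta> rng by blast
    have mk: "Gseq tt \<eta>f v0 n \<in> {\<gamma>. sg_markov_cs s T \<gamma>}"
      using Gseq_markov[where t=tt and \<eta>=\<eta>f and n=n] tt meas by simp
    have "sg_vM T g M F Xsol s x \<le> (SUP u\<in>?C. integral\<^sup>L (M s) (\<lambda>\<omega>. g (Xsol s x u (Gseq tt \<eta>f v0 n) T \<omega>)))"
      unfolding sg_vM_def by (rule cINF_lower[OF bddB mk])
    also have "\<dots> \<le> w s x + real n * (h * \<phi> h)"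
      by (rule cSUP_least[OF Cne]) (rule key[OF tt])
    finally show ?thesis .
  qed
  show "sg_vM T g M F Xsol s x \<le> w s x"
  proof (cases "s = T")
    case True
    have "sg_vM T g M F Xsol s x \<le> w s x + real 0 * (1 * \<phi> 1)"
      by (rule vbound[of "\<lambda>k. s + real k" 0 1]) (use True in auto)
    then show ?thesis by simp
  next
    case False
    then have sT: "s < T" using s by simp
    show ?thesis
    proof (rule ccontr)
      assume neg: "\<not> sg_vM T g M F Xsol s x \<le> w s x"
      define d where "d = sg_vM T g M F Xsol s x - w s x"
      have d: "d > 0" using neg unfolding d_def by simp
      define eps where "eps = d / (T - s)"
      have eps: "eps > 0" unfolding eps_def using d sT by simp
      have "eventually (\<lambda>e. \<phi> e < eps) (at_right 0)"
        using order_tendstoD(2)[OF philim eps] .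
      then obtain bb :: real where bb: "bb > 0" "\<And>y. 0 < y \<Longrightarrow> y < bb \<Longrightarrow> \<phi> y < eps"
        unfolding eventually_at_right_field by auto
      obtain m :: nat where m: "(T - s) / bb < real m" using reals_Archimedean2 by blast
      define n where "n = Suc m"
      define h where "h = (T - s) / real n"
      have npos: "real n > 0" unfolding n_def by simp
      have hpos: "h > 0" unfolding h_def using npos sT by simp
      have "(T - s) / bb < real n" using m unfolding n_def by simp
      then have "T - s < real n * bb" using bb(1) by (simp add: field_simps)
      then have hb: "h < bb" unfolding h_def using npos by (simp add: field_simps)
      have nh: "real n * h = T - s" unfolding h_def using npos by simp
      have "sg_vM T g M F Xsol s x \<le> w s x + real n * (h * \<phi> h)"
      proof (rule vbound[of "\<lambda>k. s + real k * h" n h])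
        show "\<And>i j. i < j \<Longrightarrow> s + real i * h < s + real j * h" using hpos by simp
        show "s + real 0 * h = s" by simp
        show "s + real n * h = T" using nh by simp
        show "\<And>k. s + real (Suc k) * h - (s + real k * h) = h" by (simp add: algebra_simps)
      qed
      also have "\<dots> = w s x + (T - s) * \<phi> h" using nh by (simp add: mult.assoc[symmetric])
      also have "\<dots> < w s x + (T - s) * eps"
        using bb(2)[OF hpos hb] sT by simp
      also have "\<dots> = sg_vM T g M F Xsol s x" unfolding eps_def d_def using sT by simp
      finally show False by simp
    qed
  qed
qed


end
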